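(* Let $G$ be a connected bisplit graph, and let $(X,Y,Z)$ be a partition of $V(G)$ into stable sets with $Y$ complete to $Z$ chosen so that $|Y\cup Z|$ is maximum among all such partitions. Let $X_Y$ be the set of vertices of $X$ all of whose neighbours lie in $Y$, and $X_Z$ the set of vertices of $X$ all of whose neighbours lie in $Z$. If $X_Y$ and $X_Z$ are both non-empty, then $G$ has the de Bruijn-Erd\H{o}s property: the metric space $(V(G), d_G)$ has a universal line or at least $|V(G)|$ distinct lines.
   Context: A connected graph $G$ is bisplit if its vertex set can be partitioned into three stable sets $X$, $Y$, $Z$ such that every vertex of $Y$ is adjacent to every vertex of $Z$. $d_G$ is the shortest-path distance. In a metric space $(V,\rho)$, an element $b$ is between $a$ and $c$ if $\rho(a,b)+\rho(b,c)=\rho(a,c)$; three elements are collinear if one is between the other two. For distinct $a,b\in V$, the line generated by $a$ and $b$ is the set consisting of $a$, $b$, and all $c$ such that $a,b,c$ are collinear. A line is universal if it equals $V$. *)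

theory Defs
  imports Main
begin

definition simple_graph :: "'a set \<Rightarrow> ('a \<Rightarrow> 'a \<Rightarrow> bool) \<Rightarrow> bool" where
  "simple_graph V E \<longleftrightarrow> finite V \<and>
     (\<forall>u v. E u v \<longrightarrow> u \<in> V \<and> v \<in> V) \<and>
     (\<forall>u v. E u v \<longrightarrow> E v u) \<and> (\<forall>u. \<not> E u u)"

definition is_walk :: "'a set \<Rightarrow> ('a \<Rightarrow> 'a \<Rightarrow> bool) \<Rightarrow> 'a list \<Rightarrow> bool" where
  "is_walk V E xs \<longleftrightarrow> xs \<noteq> [] \<and> set xs \<subseteq> V \<and>
     (\<forall>i. Suc i < length xs \<longrightarrow> E (xs ! i) (xs ! Suc i))"

definition connected_graph :: "'a set \<Rightarrow> ('a \<Rightarrow> 'a \<Rightarrow> bool) \<Rightarrow> bool" where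
  "connected_graph V E \<longleftrightarrow> simple_graph V E \<and> V \<noteq> {} \<and>
     (\<forall>u\<in>V. \<forall>v\<in>V. \<exists>xs. is_walk V E xs \<and> hd xs = u \<and> last xs = v)"

definition gdist :: "'a set \<Rightarrow> ('a \<Rightarrow> 'a \<Rightarrow> bool) \<Rightarrow> 'a \<Rightarrow> 'a \<Rightarrow> nat" where
  "gdist V E u v = (LEAST n. \<exists>xs. is_walk V E xs \<and> hd xs = u \<and> last xs = v \<and> length xs = Suc n)"

definition stable :: "('a \<Rightarrow> 'a \<Rightarrow> bool) \<Rightarrow> 'a set \<Rightarrow> bool" where
  "stable E S \<longleftrightarrow> (\<forall>u\<in>S. \<forall>v\<in>S. \<not> E u v)"

definition bisplit_partition ::
  "'a set \<Rightarrow> ('a \<Rightarrow> 'a \<Rightarrow> bool) \<Rightarrow> 'a set \<Rightarrow> 'a set \<Rightarrow> 'a set \<Rightarrow> bool" where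
  "bisplit_partition V E X Y Z \<longleftrightarrow>
     X \<union> Y \<union> Z = V \<and> X \<inter> Y = {} \<and> X \<inter> Z = {} \<and> Y \<inter> Z = {} \<and>
     stable E X \<and> stable E Y \<and> stable E Z \<and>
     (\<forall>y\<in>Y. \<forall>z\<in>Z. E y z)"

definition bisplit :: "'a set \<Rightarrow> ('a \<Rightarrow> 'a \<Rightarrow> bool) \<Rightarrow> bool" where
  "bisplit V E \<longleftrightarrow> connected_graph V E \<and> (\<exists>X Y Z. bisplit_partition V E X Y Z)"

definition between :: "('a \<Rightarrow> 'a \<Rightarrow> nat) \<Rightarrow> 'a \<Rightarrow> 'a \<Rightarrow> 'a \<Rightarrow> bool" where
  "between d a b c \<longleftrightarrow> d a b + d b c = d a c"

definition collinear3 :: "('a \<Rightarrow> 'a \<Rightarrow> nat) \<Rightarrow> 'a \<Rightarrow> 'a \<Rightarrow> 'a \<Rightarrow> bool" where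
  "collinear3 d a b c \<longleftrightarrow> between d b a c \<or> between d a b c \<or> between d a c b"

definition line :: "'a set \<Rightarrow> ('a \<Rightarrow> 'a \<Rightarrow> nat) \<Rightarrow> 'a \<Rightarrow> 'a \<Rightarrow> 'a set" where
  "line V d a b = {a, b} \<union> {c \<in> V. collinear3 d a b c}"

definition lines :: "'a set \<Rightarrow> ('a \<Rightarrow> 'a \<Rightarrow> nat) \<Rightarrow> 'a set set" where
  "lines V d = {line V d a b | a b. a \<in> V \<and> b \<in> V \<and> a \<noteq> b}"

definition de_bruijn_erdos :: "'a set \<Rightarrow> ('a \<Rightarrow> 'a \<Rightarrow> nat) \<Rightarrow> bool" where
  "de_bruijn_erdos V d \<longleftrightarrow> (\<exists>L\<in>lines V d. L = V) \<or> card (lines V d) \<ge> card V"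

end

theory Submission
  imports Defs
begin

lemma gd_le:
  assumes "is_walk V E xs" "hd xs = u" "last xs = v" "length xs = Suc n"
  shows "gdist V E u v \<le> n"
  unfolding gdist_def by (rule Least_le) (use assms in blast)

lemma gd_ex:
  assumes "connected_graph V E" "u \<in> V" "v \<in> V"
  shows "\<exists>xs. is_walk V E xs \<and> hd xs = u \<and> last xs = v \<and> length xs = Suc (gdist V E u v)"
proof -
  obtain xs where xs: "is_walk V E xs" "hd xs = u" "last xs = v"
    using assms unfolding connected_graph_def by blast
  then have "length xs = Suc (length xs - 1)" unfolding is_walk_def by (cases xs) auto
  with xs have "\<exists>n xs. is_walk V E xs \<and> hd xs = u \<and> last xs = v \<and> length xs = Suc n" by blast
  then show ?thesis unfolding gdist_def by (rule LeastI_ex)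
qed

lemma walk_lst:
  assumes "simple_graph V E" "set xs \<subseteq> V" "xs \<noteq> []"
    "\<forall>i. Suc i < length xs \<longrightarrow> E (xs ! i) (xs ! Suc i)"
  shows "is_walk V E xs"
  using assms unfolding is_walk_def by blast

lemma gd_le1: assumes "simple_graph V E" "E u v" shows "gdist V E u v \<le> 1"
proof -
  have EV: "\<And>a b. E a b \<Longrightarrow> a \<in> V \<and> b \<in> V" using assms(1) unfolding simple_graph_def by blast
  have "is_walk V E [u,v]" unfolding is_walk_def using assms(2-) EV
    by (auto simp: less_Suc_eq nth_Cons')
  then show ?thesis by (rule gd_le) auto
qed

lemma gd_le2: assumes "simple_graph V E" "E u p" "E p v" shows "gdist V E u v \<le> 2"
proof -
  have EV: "\<And>a b. E a b \<Longrightarrow> a \<in> V \<and> b \<in> V" using assms(1) unfolding simple_graph_def by blast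
  have "is_walk V E [u,p,v]" unfolding is_walk_def using assms(2-) EV
    by (auto simp: less_Suc_eq nth_Cons')
  then show ?thesis by (rule gd_le) auto
qed

lemma gd_le3: assumes "simple_graph V E" "E u p" "E p q" "E q v" shows "gdist V E u v \<le> 3"
proof -
  have EV: "\<And>a b. E a b \<Longrightarrow> a \<in> V \<and> b \<in> V" using assms(1) unfolding simple_graph_def by blast
  have "is_walk V E [u,p,q,v]" unfolding is_walk_def using assms(2-) EV
    by (auto simp: less_Suc_eq nth_Cons')
  then show ?thesis by (rule gd_le) auto
qed

lemma gd_le4: assumes "simple_graph V E" "E u p" "E p q" "E q r" "E r v" shows "gdist V E u v \<le> 4"
proof -
  have EV: "\<And>a b. E a b \<Longrightarrow> a \<in> V \<and> b \<in> V" using assms(1) unfolding simple_graph_def by blast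
  have "is_walk V E [u,p,q,r,v]" unfolding is_walk_def using assms(2-) EV
    by (auto simp: less_Suc_eq nth_Cons')
  then show ?thesis by (rule gd_le) auto
qed

lemma gd_ge3:
  assumes "connected_graph V E" "u \<in> V" "v \<in> V" "u \<noteq> v" "\<not> E u v" "\<not> (\<exists>p. E u p \<and> E p v)"
  shows "gdist V E u v \<ge> 3"
proof (rule ccontr)
  assume "\<not> ?thesis"
  then have lt: "gdist V E u v < 3" by simp
  obtain xs where xs: "is_walk V E xs" "hd xs = u" "last xs = v" "length xs = Suc (gdist V E u v)"
    using gd_ex[OF assms(1-3)] by blast
  have ne: "xs \<noteq> []" using xs by auto
  have hd: "hd xs = xs ! 0" using ne by (simp add: hd_conv_nth)
  have lst: "last xs = xs ! (length xs - 1)" using ne by (simp add: last_conv_nth)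
  have adj: "\<And>i. Suc i < length xs \<Longrightarrow> E (xs ! i) (xs ! Suc i)" using xs unfolding is_walk_def by blast
  consider "gdist V E u v = 0" | "gdist V E u v = 1" | "gdist V E u v = 2" using lt by linarith
  then show False
  proof cases
    case 1 then show ?thesis using xs hd lst assms(4) by simp
  next
    case 2 then show ?thesis using xs hd lst assms(5) adj[of 0] by simp
  next
    case 3 then show ?thesis using xs hd lst assms(6) adj[of 0] adj[of 1] by (auto simp add: numeral_2_eq_2)
  qed
qed

lemma gd_ge2:
  assumes "connected_graph V E" "u \<in> V" "v \<in> V" "u \<noteq> v" "\<not> E u v"
  shows "gdist V E u v \<ge> 2"
proof (rule ccontr)
  assume "\<not> ?thesis"
  then have lt: "gdist V E u v < 2" by simp
  obtain xs where xs: "is_walk V E xs" "hd xs = u" "last xs = v" "length xs = Suc (gdist V E u v)"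
    using gd_ex[OF assms(1-3)] by blast
  have ne: "xs \<noteq> []" using xs by auto
  have hd: "hd xs = xs ! 0" using ne by (simp add: hd_conv_nth)
  have lst: "last xs = xs ! (length xs - 1)" using ne by (simp add: last_conv_nth)
  have adj: "\<And>i. Suc i < length xs \<Longrightarrow> E (xs ! i) (xs ! Suc i)" using xs unfolding is_walk_def by blast
  consider "gdist V E u v = 0" | "gdist V E u v = 1" using lt by linarith
  then show False
  proof cases
    case 1 then show ?thesis using xs hd lst assms(4) by simp
  next
    case 2 then show ?thesis using xs hd lst assms(5) adj[of 0] by simp
  qed
qed

lemma gd_ge1:
  assumes "connected_graph V E" "u \<in> V" "v \<in> V" "u \<noteq> v"
  shows "gdist V E u v \<ge> 1"
proof (rule ccontr)
  assume "\<not> ?thesis"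
  then have lt: "gdist V E u v = 0" by simp
  obtain xs where xs: "is_walk V E xs" "hd xs = u" "last xs = v" "length xs = Suc (gdist V E u v)"
    using gd_ex[OF assms(1-3)] by blast
  have ne: "xs \<noteq> []" using xs by auto
  have hd: "hd xs = xs ! 0" using ne by (simp add: hd_conv_nth)
  have lst: "last xs = xs ! (length xs - 1)" using ne by (simp add: last_conv_nth)
  show False using xs hd lst assms(4) lt by simp
qed

lemma walk_rev:
  assumes "simple_graph V E" "is_walk V E xs" shows "is_walk V E (rev xs)"
  unfolding is_walk_def
proof (intro conjI allI impI)
  show "rev xs \<noteq> []" "set (rev xs) \<subseteq> V" using assms(2) unfolding is_walk_def by auto
  fix i assume i: "Suc i < length (rev xs)"
  define j where "j = length xs - Suc (Suc i)"
  have j1: "Suc j < length xs" and j2: "Suc j = length xs - Suc i" using i unfolding j_def by auto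
  have "E (xs ! j) (xs ! Suc j)" using assms(2) j1 unfolding is_walk_def by blast
  moreover have "\<And>a b. E a b \<Longrightarrow> E b a" using assms(1) unfolding simple_graph_def by blast
  ultimately have "E (xs ! Suc j) (xs ! j)" by blast
  moreover have "rev xs ! i = xs ! Suc j" using i j2 by (simp add: rev_nth)
  moreover have "rev xs ! Suc i = xs ! j" using i unfolding j_def by (simp add: rev_nth)
  ultimately show "E (rev xs ! i) (rev xs ! Suc i)" by simp
qed

lemma gd_sym: assumes "simple_graph V E" shows "gdist V E u v = gdist V E v u"
proof -
  have "\<And>n u v. (\<exists>xs. is_walk V E xs \<and> hd xs = u \<and> last xs = v \<and> length xs = Suc n) \<Longrightarrow>
    (\<exists>xs. is_walk V E xs \<and> hd xs = v \<and> last xs = u \<and> length xs = Suc n)"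
  proof -
    fix n u v assume "\<exists>xs. is_walk V E xs \<and> hd xs = u \<and> last xs = v \<and> length xs = Suc n"
    then obtain xs where xs: "is_walk V E xs" "hd xs = u" "last xs = v" "length xs = Suc n" by blast
    have ne: "xs \<noteq> []" using xs by auto
    show "\<exists>xs. is_walk V E xs \<and> hd xs = v \<and> last xs = u \<and> length xs = Suc n"
    proof (rule exI[of _ "rev xs"], intro conjI)
      show "is_walk V E (rev xs)" using walk_rev[OF assms xs(1)] .
      show "hd (rev xs) = v" using xs(3) by (simp add: hd_rev)
      show "last (rev xs) = u" using xs(2) by (simp add: last_rev)
      show "length (rev xs) = Suc n" using xs(4) by simp
    qed
  qed
  note R = this
  have "(\<lambda>n. \<exists>xs. is_walk V E xs \<and> hd xs = u \<and> last xs = v \<and> length xs = Suc n) =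
    (\<lambda>n. \<exists>xs. is_walk V E xs \<and> hd xs = v \<and> last xs = u \<and> length xs = Suc n)"
    apply (rule ext) apply (rule iffI) apply (erule R) apply (erule R) done
  then show ?thesis unfolding gdist_def by simp
qed

lemma notin_line:
  assumes "\<And>x y. d x y = d y x" "c \<noteq> p" "c \<noteq> q"
    "d p q + d p c \<noteq> d q c" "d p q + d q c \<noteq> d p c" "d p c + d q c \<noteq> d p q"
  shows "c \<notin> line V d p q"
  using assms unfolding line_def collinear3_def between_def by (simp; metis)

lemma in_line:
  assumes "\<And>x y. d x y = d y x" "c \<in> V"
    "d p q + d p c = d q c \<or> d p q + d q c = d p c \<or> d p c + d q c = d p q"
  shows "c \<in> line V d p q"
  using assms unfolding line_def collinear3_def between_def by (simp; metis)


theorem proposition2: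
  fixes V :: "'a set" and E :: "'a \<Rightarrow> 'a \<Rightarrow> bool" and X Y Z :: "'a set"
  assumes "connected_graph V E"
    and "bisplit_partition V E X Y Z"
    and "\<forall>X' Y' Z'. bisplit_partition V E X' Y' Z' \<longrightarrow> card (Y' \<union> Z') \<le> card (Y \<union> Z)"
    and "{x \<in> X. \<forall>w. E x w \<longrightarrow> w \<in> Y} \<noteq> {}"
    and "{x \<in> X. \<forall>w. E x w \<longrightarrow> w \<in> Z} \<noteq> {}"
  shows "de_bruijn_erdos V (gdist V E)"
proof -
  note conn = assms(1)
  have sg: "simple_graph V E" using conn unfolding connected_graph_def by blast
  have fin: "finite V" using sg unfolding simple_graph_def by blast
  have Esym: "\<And>u v. E u v \<Longrightarrow> E v u" using sg unfolding simple_graph_def by blast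
  have EV: "\<And>u v. E u v \<Longrightarrow> u \<in> V \<and> v \<in> V" using sg unfolding simple_graph_def by blast
  have Eirr: "\<And>u. \<not> E u u" using sg unfolding simple_graph_def by blast
  have PV: "X \<union> Y \<union> Z = V" and dXY: "X \<inter> Y = {}" and dXZ: "X \<inter> Z = {}" and dYZ: "Y \<inter> Z = {}"
    using assms(2) unfolding bisplit_partition_def by blast+
  have sX: "\<And>u v. u \<in> X \<Longrightarrow> v \<in> X \<Longrightarrow> \<not> E u v"
    and sY: "\<And>u v. u \<in> Y \<Longrightarrow> v \<in> Y \<Longrightarrow> \<not> E u v"
    and sZ: "\<And>u v. u \<in> Z \<Longrightarrow> v \<in> Z \<Longrightarrow> \<not> E u v"
    using assms(2) unfolding bisplit_partition_def stable_def by blast+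
  have cYZ: "\<And>y z. y \<in> Y \<Longrightarrow> z \<in> Z \<Longrightarrow> E y z"
    using assms(2) unfolding bisplit_partition_def by blast
  have cZY: "\<And>y z. y \<in> Y \<Longrightarrow> z \<in> Z \<Longrightarrow> E z y" using cYZ Esym by blast
  have XV: "X \<subseteq> V" and YV: "Y \<subseteq> V" and ZV: "Z \<subseteq> V" using PV by blast+
  have nXY: "\<And>u. u \<in> X \<Longrightarrow> u \<notin> Y" and nXZ: "\<And>u. u \<in> X \<Longrightarrow> u \<notin> Z"
    and nYZ: "\<And>u. u \<in> Y \<Longrightarrow> u \<notin> Z" using dXY dXZ dYZ by blast+
  have nbX: "\<And>x w. x \<in> X \<Longrightarrow> E x w \<Longrightarrow> w \<in> Y \<or> w \<in> Z"
    using EV sX PV by blast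
  define A where "A = {x \<in> X. \<forall>w. E x w \<longrightarrow> w \<in> Y}"
  define B where "B = {x \<in> X. \<forall>w. E x w \<longrightarrow> w \<in> Z}"
  define M where "M = X - A - B"
  have cnbr: "\<And>u v. u \<in> V \<Longrightarrow> v \<in> V \<Longrightarrow> u \<noteq> v \<Longrightarrow> \<exists>w. E u w"
  proof -
    fix u v assume uv: "u \<in> V" "v \<in> V" "u \<noteq> v"
    then obtain xs where xs: "is_walk V E xs" "hd xs = u" "last xs = v"
      using conn unfolding connected_graph_def by blast
    have ne: "xs \<noteq> []" using xs unfolding is_walk_def by blast
    have "length xs \<noteq> 1"
    proof
      assume "length xs = 1"
      then obtain x where "xs = [x]" by (cases xs) auto
      then show False using xs uv by simp
    qed
    then have l: "Suc 0 < length xs" using ne by (cases xs) auto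
    then have "E (xs ! 0) (xs ! Suc 0)" using xs unfolding is_walk_def by blast
    moreover have "xs ! 0 = u" using xs ne by (simp add: hd_conv_nth)
    ultimately show "\<exists>w. E u w" by blast
  qed
  have fYZ: "finite (Y \<union> Z)" using fin YV ZV finite_subset by blast
  have Amiss: "\<And>a. a \<in> A \<Longrightarrow> \<exists>y\<in>Y. \<not> E a y"
  proof (rule ccontr)
    fix a assume aA: "a \<in> A" and nm: "\<not> (\<exists>y\<in>Y. \<not> E a y)"
    have aX: "a \<in> X" and aN: "\<And>w. E a w \<Longrightarrow> w \<in> Y" using aA unfolding A_def by blast+
    have "bisplit_partition V E (X - {a}) Y (Z \<union> {a})"
      unfolding bisplit_partition_def stable_def
    proof (intro conjI ballI)
      show "X - {a} \<union> Y \<union> (Z \<union> {a}) = V" using PV aX by blast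
      show "(X - {a}) \<inter> Y = {}" "(X - {a}) \<inter> (Z \<union> {a}) = {}" "Y \<inter> (Z \<union> {a}) = {}"
        using dXY dXZ dYZ aX by blast+
      fix u v
      show "u \<in> X - {a} \<Longrightarrow> v \<in> X - {a} \<Longrightarrow> \<not> E u v" using sX by blast
      show "u \<in> Y \<Longrightarrow> v \<in> Y \<Longrightarrow> \<not> E u v" using sY by blast
      show "u \<in> Z \<union> {a} \<Longrightarrow> v \<in> Z \<union> {a} \<Longrightarrow> \<not> E u v"
        using sZ aN Esym Eirr nYZ by blast
      show "u \<in> Y \<Longrightarrow> v \<in> Z \<union> {a} \<Longrightarrow> E u v" using cYZ nm Esym by blast
    qed
    then have "card (Y \<union> (Z \<union> {a})) \<le> card (Y \<union> Z)" using assms(3) by blast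
    moreover have "Y \<union> (Z \<union> {a}) = insert a (Y \<union> Z)" by blast
    moreover have "a \<notin> Y \<union> Z" using aX nXY nXZ by blast
    ultimately show False using fYZ by simp
  qed
  have Bmiss: "\<And>b. b \<in> B \<Longrightarrow> \<exists>z\<in>Z. \<not> E b z"
  proof (rule ccontr)
    fix a assume aA: "a \<in> B" and nm: "\<not> (\<exists>y\<in>Z. \<not> E a y)"
    have aX: "a \<in> X" and aN: "\<And>w. E a w \<Longrightarrow> w \<in> Z" using aA unfolding B_def by blast+
    have "bisplit_partition V E (X - {a}) (Y \<union> {a}) Z"
      unfolding bisplit_partition_def stable_def
    proof (intro conjI ballI)
      show "X - {a} \<union> (Y \<union> {a}) \<union> Z = V" using PV aX by blast
      show "(X - {a}) \<inter> (Y \<union> {a}) = {}" "(X - {a}) \<inter> Z = {}" "(Y \<union> {a}) \<inter> Z = {}"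
        using dXY dXZ dYZ aX by blast+
      fix u v
      show "u \<in> X - {a} \<Longrightarrow> v \<in> X - {a} \<Longrightarrow> \<not> E u v" using sX by blast
      show "u \<in> Z \<Longrightarrow> v \<in> Z \<Longrightarrow> \<not> E u v" using sZ by blast
      show "u \<in> Y \<union> {a} \<Longrightarrow> v \<in> Y \<union> {a} \<Longrightarrow> \<not> E u v"
        using sY aN Esym Eirr nYZ by blast
      show "u \<in> Y \<union> {a} \<Longrightarrow> v \<in> Z \<Longrightarrow> E u v" using cYZ nm by blast
    qed
    then have "card ((Y \<union> {a}) \<union> Z) \<le> card (Y \<union> Z)" using assms(3) by blast
    moreover have "(Y \<union> {a}) \<union> Z = insert a (Y \<union> Z)" by blast
    moreover have "a \<notin> Y \<union> Z" using aX nXY nXZ by blast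
    ultimately show False using fYZ by simp
  qed
  have Anbr: "\<And>a. a \<in> A \<Longrightarrow> \<exists>y\<in>Y. E a y"
  proof -
    fix a assume aA: "a \<in> A"
    obtain y where "y \<in> Y" using Amiss[OF aA] by blast
    moreover have "a \<in> X" using aA unfolding A_def by blast
    ultimately obtain w where "E a w" using cnbr XV YV nXY by blast
    then show "\<exists>y\<in>Y. E a y" using aA unfolding A_def by blast
  qed
  have Bnbr: "\<And>a. a \<in> B \<Longrightarrow> \<exists>y\<in>Z. E a y"
  proof -
    fix a assume aA: "a \<in> B"
    obtain y where "y \<in> Z" using Bmiss[OF aA] by blast
    moreover have "a \<in> X" using aA unfolding B_def by blast
    ultimately obtain w where "E a w" using cnbr XV ZV nXZ by blast
    then show "\<exists>y\<in>Z. E a y" using aA unfolding B_def by blast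
  qed
  have AX: "A \<subseteq> X" and BX: "B \<subseteq> X" and MX: "M \<subseteq> X" unfolding A_def B_def M_def by blast+
  have nAB: "\<And>u. u \<in> A \<Longrightarrow> u \<notin> B"
  proof
    fix u assume "u \<in> A" "u \<in> B"
    then obtain y where "y \<in> Y" "E u y" using Anbr by blast
    then show False using \<open>u \<in> B\<close> nYZ unfolding B_def by blast
  qed
  have nMA: "\<And>u. u \<in> M \<Longrightarrow> u \<notin> A" and nMB: "\<And>u. u \<in> M \<Longrightarrow> u \<notin> B"
    unfolding M_def by blast+
  have Mnbr: "\<And>m. m \<in> M \<Longrightarrow> (\<exists>y\<in>Y. E m y) \<and> (\<exists>z\<in>Z. E m z)"
  proof -
    fix m assume mM: "m \<in> M"
    then have mX: "m \<in> X" "m \<notin> A" "m \<notin> B" unfolding M_def by blast+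
    then obtain w1 where w1: "E m w1" "w1 \<notin> Y" unfolding A_def by blast
    obtain w2 where w2: "E m w2" "w2 \<notin> Z" using mX unfolding B_def by blast
    show "(\<exists>y\<in>Y. E m y) \<and> (\<exists>z\<in>Z. E m z)" using nbX[OF mX(1)] w1 w2 by blast
  qed
  obtain a0 where a0: "a0 \<in> A" using assms(4) unfolding A_def by blast
  obtain b0 where b0: "b0 \<in> B" using assms(5) unfolding B_def by blast
  obtain y1 where y1: "y1 \<in> Y" "E a0 y1" using Anbr[OF a0] by blast
  obtain y3 where y3: "y3 \<in> Y" "\<not> E a0 y3" using Amiss[OF a0] by blast
  obtain z1 where z1: "z1 \<in> Z" "E b0 z1" using Bnbr[OF b0] by blast
  obtain z3 where z3: "z3 \<in> Z" "\<not> E b0 z3" using Bmiss[OF b0] by blast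
  have y13: "y1 \<noteq> y3" using y1 y3 by blast
  have z13: "z1 \<noteq> z3" using z1 z3 by blast
  define d where "d = gdist V E"
  have ds: "\<And>u v. d u v = d v u" unfolding d_def using gd_sym[OF sg] by blast
  have le1: "\<And>u v. E u v \<Longrightarrow> d u v \<le> 1" unfolding d_def using gd_le1[OF sg] by blast
  have le2: "\<And>u p v. E u p \<Longrightarrow> E p v \<Longrightarrow> d u v \<le> 2" unfolding d_def using gd_le2[OF sg] by blast
  have le3: "\<And>u p q v. E u p \<Longrightarrow> E p q \<Longrightarrow> E q v \<Longrightarrow> d u v \<le> 3" unfolding d_def using gd_le3[OF sg] by blast
  have le4: "\<And>u p q r v. E u p \<Longrightarrow> E p q \<Longrightarrow> E q r \<Longrightarrow> E r v \<Longrightarrow> d u v \<le> 4" unfolding d_def using gd_le4[OF sg] by blast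
  have ge1: "\<And>u v. u \<in> V \<Longrightarrow> v \<in> V \<Longrightarrow> u \<noteq> v \<Longrightarrow> d u v \<ge> 1" unfolding d_def using gd_ge1[OF conn] by blast
  have ge2: "\<And>u v. u \<in> V \<Longrightarrow> v \<in> V \<Longrightarrow> u \<noteq> v \<Longrightarrow> \<not> E u v \<Longrightarrow> d u v \<ge> 2" unfolding d_def using gd_ge2[OF conn] by blast
  have ge3: "\<And>u v. u \<in> V \<Longrightarrow> v \<in> V \<Longrightarrow> u \<noteq> v \<Longrightarrow> \<not> E u v \<Longrightarrow> \<not> (\<exists>p. E u p \<and> E p v) \<Longrightarrow> d u v \<ge> 3" unfolding d_def using gd_ge3[OF conn] by blast
  have AV: "A \<subseteq> V" and BV: "B \<subseteq> V" and MV: "M \<subseteq> V" using AX BX MX XV by blast+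
  have AN: "\<And>a w. a \<in> A \<Longrightarrow> E a w \<Longrightarrow> w \<in> Y" unfolding A_def by blast
  have BN: "\<And>a w. a \<in> B \<Longrightarrow> E a w \<Longrightarrow> w \<in> Z" unfolding B_def by blast

  have dAZ: "\<And>a z. a \<in> A \<Longrightarrow> z \<in> Z \<Longrightarrow> d a z = 2"
  proof -
    fix a z assume a: "a \<in> A" and z: "z \<in> Z"
    obtain y where y: "y \<in> Y" "E a y" using Anbr[OF a] by blast
    have "d a z \<le> 2" using le2[OF y(2) cYZ[OF y(1) z]] .
    moreover have "d a z \<ge> 2" using ge2 a z AV ZV AX nXZ AN nYZ by blast
    ultimately show "d a z = 2" by simp
  qed
  have dBY: "\<And>a z. a \<in> B \<Longrightarrow> z \<in> Y \<Longrightarrow> d a z = 2"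
  proof -
    fix a z assume a: "a \<in> B" and z: "z \<in> Y"
    obtain y where y: "y \<in> Z" "E a y" using Bnbr[OF a] by blast
    have "d a z \<le> 2" using le2[OF y(2) cZY[OF z y(1)]] .
    moreover have "d a z \<ge> 2" using ge2 a z BV YV BX nXY BN nYZ by blast
    ultimately show "d a z = 2" by simp
  qed
  have dAY1: "\<And>a y. a \<in> A \<Longrightarrow> y \<in> Y \<Longrightarrow> E a y \<Longrightarrow> d a y = 1"
  proof -
    fix a y assume a: "a \<in> A" and y: "y \<in> Y" and e: "E a y"
    have "d a y \<le> 1" using le1[OF e] .
    moreover have "a \<noteq> y" using a y AX nXY by blast
    then have "d a y \<ge> 1" using ge1 e EV by blast
    ultimately show "d a y = 1" by simp
  qed
  have dBZ1: "\<And>a y. a \<in> B \<Longrightarrow> y \<in> Z \<Longrightarrow> E a y \<Longrightarrow> d a y = 1"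
  proof -
    fix a y assume a: "a \<in> B" and y: "y \<in> Z" and e: "E a y"
    have "d a y \<le> 1" using le1[OF e] .
    moreover have "a \<noteq> y" using a y BX nXZ by blast
    then have "d a y \<ge> 1" using ge1 e EV by blast
    ultimately show "d a y = 1" by simp
  qed
  have dAY3: "\<And>a y. a \<in> A \<Longrightarrow> y \<in> Y \<Longrightarrow> \<not> E a y \<Longrightarrow> d a y = 3"
  proof -
    fix a y assume a: "a \<in> A" and y: "y \<in> Y" and ne: "\<not> E a y"
    obtain y' where y': "y' \<in> Y" "E a y'" using Anbr[OF a] by blast
    have "d a y \<le> 3" using le3[OF y'(2) cYZ[OF y'(1) z1(1)] cZY[OF y z1(1)]] .
    moreover have "d a y \<ge> 3"
    proof (rule ge3)
      show "a \<in> V" "y \<in> V" using a y AV YV by blast+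
      show "a \<noteq> y" using a y AX nXY by blast
      show "\<not> E a y" by fact
      show "\<not> (\<exists>p. E a p \<and> E p y)" using AN[OF a] sY y by blast
    qed
    ultimately show "d a y = 3" by simp
  qed
  have dBZ3: "\<And>a y. a \<in> B \<Longrightarrow> y \<in> Z \<Longrightarrow> \<not> E a y \<Longrightarrow> d a y = 3"
  proof -
    fix a y assume a: "a \<in> B" and y: "y \<in> Z" and ne: "\<not> E a y"
    obtain y' where y': "y' \<in> Z" "E a y'" using Bnbr[OF a] by blast
    have "d a y \<le> 3" using le3[OF y'(2) cZY[OF y1(1) y'(1)] cYZ[OF y1(1) y]] .
    moreover have "d a y \<ge> 3"
    proof (rule ge3)
      show "a \<in> V" "y \<in> V" using a y BV ZV by blast+
      show "a \<noteq> y" using a y BX nXZ by blast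
      show "\<not> E a y" by fact
      show "\<not> (\<exists>p. E a p \<and> E p y)" using BN[OF a] sZ y by blast
    qed
    ultimately show "d a y = 3" by simp
  qed
  have dAB: "\<And>a b. a \<in> A \<Longrightarrow> b \<in> B \<Longrightarrow> d a b = 3"
  proof -
    fix a b assume a: "a \<in> A" and b: "b \<in> B"
    obtain y' where y': "y' \<in> Y" "E a y'" using Anbr[OF a] by blast
    obtain z' where z': "z' \<in> Z" "E b z'" using Bnbr[OF b] by blast
    have "d a b \<le> 3" using le3[OF y'(2) cYZ[OF y'(1) z'(1)] Esym[OF z'(2)]] .
    moreover have "d a b \<ge> 3"
    proof (rule ge3)
      show "a \<in> V" "b \<in> V" using a b AV BV by blast+
      show "a \<noteq> b" using a b nAB by blast
      show "\<not> E a b" using a b AX BX sX by blast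
      show "\<not> (\<exists>p. E a p \<and> E p b)" using AN[OF a] BN[OF b] Esym nYZ by blast
    qed
    ultimately show "d a b = 3" by simp
  qed
  have dYZ1: "\<And>y z. y \<in> Y \<Longrightarrow> z \<in> Z \<Longrightarrow> d y z = 1"
  proof -
    fix a y assume a: "a \<in> Y" and y: "y \<in> Z"
    have e: "E a y" using cYZ[OF a y] .
    have "d a y \<le> 1" using le1[OF e] .
    moreover have "a \<noteq> y" using a y nYZ by blast
    then have "d a y \<ge> 1" using ge1 e EV by blast
    ultimately show "d a y = 1" by simp
  qed
  have dYY: "\<And>y y'. y \<in> Y \<Longrightarrow> y' \<in> Y \<Longrightarrow> y \<noteq> y' \<Longrightarrow> d y y' = 2"
  proof -
    fix y y' assume a: "y \<in> Y" "y' \<in> Y" "y \<noteq> y'"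
    have "d y y' \<le> 2" using le2[OF cYZ[OF a(1) z1(1)] cZY[OF a(2) z1(1)]] .
    moreover have "d y y' \<ge> 2" using ge2 a YV sY by blast
    ultimately show "d y y' = 2" by simp
  qed
  have dZZ: "\<And>y y'. y \<in> Z \<Longrightarrow> y' \<in> Z \<Longrightarrow> y \<noteq> y' \<Longrightarrow> d y y' = 2"
  proof -
    fix y y' assume a: "y \<in> Z" "y' \<in> Z" "y \<noteq> y'"
    have "d y y' \<le> 2" using le2[OF cZY[OF y1(1) a(1)] cYZ[OF y1(1) a(2)]] .
    moreover have "d y y' \<ge> 2" using ge2 a ZV sZ by blast
    ultimately show "d y y' = 2" by simp
  qed
  have dAA: "\<And>a a'. a \<in> A \<Longrightarrow> a' \<in> A \<Longrightarrow> a \<noteq> a' \<Longrightarrow> 1 \<le> d a a' \<and> d a a' \<le> 4"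
  proof -
    fix a a' assume a: "a \<in> A" "a' \<in> A" "a \<noteq> a'"
    obtain y where y: "y \<in> Y" "E a y" using Anbr[OF a(1)] by blast
    obtain y' where y': "y' \<in> Y" "E a' y'" using Anbr[OF a(2)] by blast
    have "d a a' \<le> 4" using le4[OF y(2) cYZ[OF y(1) z1(1)] cZY[OF y'(1) z1(1)] Esym[OF y'(2)]] .
    moreover have "d a a' \<ge> 1" using ge1 a AV by blast
    ultimately show "1 \<le> d a a' \<and> d a a' \<le> 4" by simp
  qed
  have dBB: "\<And>a a'. a \<in> B \<Longrightarrow> a' \<in> B \<Longrightarrow> a \<noteq> a' \<Longrightarrow> 1 \<le> d a a' \<and> d a a' \<le> 4"
  proof -
    fix a a' assume a: "a \<in> B" "a' \<in> B" "a \<noteq> a'"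
    obtain y where y: "y \<in> Z" "E a y" using Bnbr[OF a(1)] by blast
    obtain y' where y': "y' \<in> Z" "E a' y'" using Bnbr[OF a(2)] by blast
    have "d a a' \<le> 4" using le4[OF y(2) cZY[OF y1(1) y(1)] cYZ[OF y1(1) y'(1)] Esym[OF y'(2)]] .
    moreover have "d a a' \<ge> 1" using ge1 a BV by blast
    ultimately show "1 \<le> d a a' \<and> d a a' \<le> 4" by simp
  qed
  have dMA: "\<And>m a. m \<in> M \<Longrightarrow> a \<in> A \<Longrightarrow> 2 \<le> d a m \<and> d a m \<le> 3"
  proof -
    fix m a assume m: "m \<in> M" and a: "a \<in> A"
    obtain y where y: "y \<in> Y" "E a y" using Anbr[OF a] by blast
    obtain z where z: "z \<in> Z" "E m z" using Mnbr[OF m] by blast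
    have "d a m \<le> 3" using le3[OF y(2) cYZ[OF y(1) z(1)] Esym[OF z(2)]] .
    moreover have "d a m \<ge> 2"
    proof (rule ge2)
      show "a \<in> V" "m \<in> V" using a m AV MV by blast+
      show "a \<noteq> m" using a nMA[OF m] by blast
      show "\<not> E a m" using sX a m AX MX by blast
    qed
    ultimately show "2 \<le> d a m \<and> d a m \<le> 3" by simp
  qed
  have dMB: "\<And>m a. m \<in> M \<Longrightarrow> a \<in> B \<Longrightarrow> 2 \<le> d a m \<and> d a m \<le> 3"
  proof -
    fix m a assume m: "m \<in> M" and a: "a \<in> B"
    obtain y where y: "y \<in> Z" "E a y" using Bnbr[OF a] by blast
    obtain z where z: "z \<in> Y" "E m z" using Mnbr[OF m] by blast
    have "d a m \<le> 3" using le3[OF y(2) cZY[OF z(1) y(1)] Esym[OF z(2)]] .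
    moreover have "d a m \<ge> 2"
    proof (rule ge2)
      show "a \<in> V" "m \<in> V" using a m BV MV by blast+
      show "a \<noteq> m" using a nMB[OF m] by blast
      show "\<not> E a m" using sX a m BX MX by blast
    qed
    ultimately show "2 \<le> d a m \<and> d a m \<le> 3" by simp
  qed
  have dMM: "\<And>m a. m \<in> M \<Longrightarrow> a \<in> M \<Longrightarrow> m \<noteq> a \<Longrightarrow> 2 \<le> d a m \<and> d a m \<le> 3"
  proof -
    fix m a assume m: "m \<in> M" and a: "a \<in> M" and ne: "m \<noteq> a"
    obtain y where y: "y \<in> Y" "E a y" using Mnbr[OF a] by blast
    obtain z where z: "z \<in> Z" "E m z" using Mnbr[OF m] by blast
    have "d a m \<le> 3" using le3[OF y(2) cYZ[OF y(1) z(1)] Esym[OF z(2)]] .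
    moreover have "d a m \<ge> 2"
    proof (rule ge2)
      show "a \<in> V" "m \<in> V" using a m MV by blast+
      show "a \<noteq> m" using ne by blast
      show "\<not> E a m" using sX a m MX by blast
    qed
    ultimately show "2 \<le> d a m \<and> d a m \<le> 3" by simp
  qed
  have dMZ: "\<And>m z. m \<in> M \<Longrightarrow> z \<in> Z \<Longrightarrow> 1 \<le> d m z \<and> d m z \<le> 3"
  proof -
    fix m z assume m: "m \<in> M" and z: "z \<in> Z"
    obtain y where y: "y \<in> Y" "E m y" using Mnbr[OF m] by blast
    have "d m z \<le> 2" using le2[OF y(2) cYZ[OF y(1) z]] .
    moreover have "d m z \<ge> 1"
    proof (rule ge1)
      show "m \<in> V" "z \<in> V" using m z MV ZV by blast+
      show "m \<noteq> z" using m z MX nXZ by blast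
    qed
    ultimately show "1 \<le> d m z \<and> d m z \<le> 3" by simp
  qed
  have dMY: "\<And>m z. m \<in> M \<Longrightarrow> z \<in> Y \<Longrightarrow> 1 \<le> d m z \<and> d m z \<le> 2"
  proof -
    fix m z assume m: "m \<in> M" and z: "z \<in> Y"
    obtain y where y: "y \<in> Z" "E m y" using Mnbr[OF m] by blast
    have "d m z \<le> 2" using le2[OF y(2) cZY[OF z y(1)]] .
    moreover have "d m z \<ge> 1"
    proof (rule ge1)
      show "m \<in> V" "z \<in> V" using m z MV YV by blast+
      show "m \<noteq> z" using m z MX nXY by blast
    qed
    ultimately show "1 \<le> d m z \<and> d m z \<le> 2" by simp
  qed

  have a0X: "a0 \<in> X" and b0X: "b0 \<in> X" using a0 b0 AX BX by blast+
  have NI: "\<And>c p q. c \<noteq> p \<Longrightarrow> c \<noteq> q \<Longrightarrow> d p q + d p c \<noteq> d q c \<Longrightarrow> d p q + d q c \<noteq> d p c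
     \<Longrightarrow> d p c + d q c \<noteq> d p q \<Longrightarrow> c \<notin> line V d p q"
    using notin_line[of d] ds by blast
  have II: "\<And>c p q. c \<in> V \<Longrightarrow> d p q + d p c = d q c \<or> d p q + d q c = d p c \<or> d p c + d q c = d p q
     \<Longrightarrow> c \<in> line V d p q"
    using in_line[of d] ds by blast
  have self1: "\<And>p q. p \<in> line V d p q" and self2: "\<And>p q. q \<in> line V d p q"
    unfolding line_def by blast+
  have FZ1: "\<And>v y. v \<in> Z \<Longrightarrow> y \<in> Y \<Longrightarrow> y \<in> line V d a0 v"
  proof -
    fix v y assume v: "v \<in> Z" and y: "y \<in> Y"
    have 1: "d a0 v = 2" using dAZ a0 v by blast
    have 2: "d v y = 1" using dYZ1[OF y v] ds[of v y] by simp
    show "y \<in> line V d a0 v"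
    proof (cases "E a0 y")
      case True then have "d a0 y = 1" using dAY1 a0 y by blast
      then show ?thesis using II[of y a0 v] y YV 1 2 by auto
    next
      case False then have "d a0 y = 3" using dAY3 a0 y by blast
      then show ?thesis using II[of y a0 v] y YV 1 2 ds by auto
    qed
  qed
  have FZ2: "\<And>v w. v \<in> Z \<Longrightarrow> w \<in> Z \<Longrightarrow> w \<noteq> v \<Longrightarrow> w \<notin> line V d a0 v"
  proof -
    fix v w assume v: "v \<in> Z" and w: "w \<in> Z" and ne: "w \<noteq> v"
    have "d a0 v = 2" "d a0 w = 2" "d v w = 2" using dAZ[OF a0 v] dAZ[OF a0 w] dZZ[OF v w] ne by auto
    moreover have "w \<noteq> a0" using w a0X nXZ by blast
    ultimately show "w \<notin> line V d a0 v" using NI[of w a0 v] ne by simp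
  qed
  have FY1: "\<And>v z. v \<in> Y \<Longrightarrow> z \<in> Z \<Longrightarrow> z \<in> line V d b0 v"
  proof -
    fix v y assume v: "v \<in> Y" and y: "y \<in> Z"
    have 1: "d b0 v = 2" using dBY b0 v by blast
    have 2: "d v y = 1" using dYZ1[OF v y] by simp
    show "y \<in> line V d b0 v"
    proof (cases "E b0 y")
      case True then have "d b0 y = 1" using dBZ1 b0 y by blast
      then show ?thesis using II[of y b0 v] y ZV 1 2 by auto
    next
      case False then have "d b0 y = 3" using dBZ3 b0 y by blast
      then show ?thesis using II[of y b0 v] y ZV 1 2 ds by auto
    qed
  qed
  have FY2: "\<And>v w. v \<in> Y \<Longrightarrow> w \<in> Y \<Longrightarrow> w \<noteq> v \<Longrightarrow> w \<notin> line V d b0 v"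
  proof -
    fix v w assume v: "v \<in> Y" and w: "w \<in> Y" and ne: "w \<noteq> v"
    have "d b0 v = 2" "d b0 w = 2" "d v w = 2" using dBY[OF b0 v] dBY[OF b0 w] dYY[OF v w] ne by auto
    moreover have "w \<noteq> b0" using w b0X nXY by blast
    ultimately show "w \<notin> line V d b0 v" using NI[of w b0 v] ne by simp
  qed
  have FB1: "\<And>v. v \<in> B \<Longrightarrow> y3 \<notin> line V d a0 v"
  proof -
    fix v assume v: "v \<in> B"
    have "d a0 v = 3" "d a0 y3 = 3" "d v y3 = 2" using dAB[OF a0 v] dAY3[OF a0 y3] dBY[OF v y3(1)] by auto
    moreover have "y3 \<noteq> a0" "y3 \<noteq> v" using y3 a0X v BX nXY by blast+
    ultimately show "y3 \<notin> line V d a0 v" using NI[of y3 a0 v] by simp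
  qed
  have FB2: "\<And>v w. v \<in> B \<Longrightarrow> w \<in> B \<Longrightarrow> w \<noteq> v \<Longrightarrow> w \<notin> line V d a0 v"
  proof -
    fix v w assume v: "v \<in> B" and w: "w \<in> B" and ne: "w \<noteq> v"
    have "d a0 v = 3" "d a0 w = 3" "1 \<le> d v w" "d v w \<le> 4" using dAB[OF a0 v] dAB[OF a0 w] dBB[OF v w] ne by auto
    moreover have "w \<noteq> a0" using w a0 nAB by blast
    ultimately show "w \<notin> line V d a0 v" using NI[of w a0 v] ne by simp
  qed
  have FB3: "\<And>v. v \<in> B \<Longrightarrow> \<exists>z\<in>Z. z \<notin> line V d a0 v"
  proof -
    fix v assume v: "v \<in> B"
    obtain z where z: "z \<in> Z" "\<not> E v z" using Bmiss[OF v] by blast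
    have "d a0 v = 3" "d a0 z = 2" "d v z = 3" using dAB[OF a0 v] dAZ[OF a0 z(1)] dBZ3[OF v z(1) z(2)] by auto
    moreover have "z \<noteq> a0" "z \<noteq> v" using z a0X v BX nXZ by blast+
    ultimately have "z \<notin> line V d a0 v" using NI[of z a0 v] by simp
    then show "\<exists>z\<in>Z. z \<notin> line V d a0 v" using z by blast
  qed
  have FA1: "\<And>v. v \<in> A \<Longrightarrow> \<exists>y\<in>Y. y \<notin> line V d b0 v"
  proof -
    fix v assume v: "v \<in> A"
    obtain z where z: "z \<in> Y" "\<not> E v z" using Amiss[OF v] by blast
    have "d b0 v = 3" "d b0 z = 2" "d v z = 3" using dAB[OF v b0] ds[of b0 v] dBY[OF b0 z(1)] dAY3[OF v z(1) z(2)] by auto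
    moreover have "z \<noteq> b0" "z \<noteq> v" using z b0X v AX nXY by blast+
    ultimately have "z \<notin> line V d b0 v" using NI[of z b0 v] by simp
    then show "\<exists>z\<in>Y. z \<notin> line V d b0 v" using z by blast
  qed
  have FA2: "\<And>v. v \<in> A \<Longrightarrow> z3 \<notin> line V d b0 v"
  proof -
    fix v assume v: "v \<in> A"
    have "d b0 v = 3" "d b0 z3 = 3" "d v z3 = 2" using dAB[OF v b0] ds[of b0 v] dBZ3[OF b0 z3(1) z3(2)] dAZ[OF v z3(1)] by auto
    moreover have "z3 \<noteq> b0" "z3 \<noteq> v" using z3 b0X v AX nXZ by blast+
    ultimately show "z3 \<notin> line V d b0 v" using NI[of z3 b0 v] by simp
  qed
  have FA3: "\<And>v w. v \<in> A \<Longrightarrow> w \<in> A \<Longrightarrow> w \<noteq> v \<Longrightarrow> w \<notin> line V d b0 v"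
  proof -
    fix v w assume v: "v \<in> A" and w: "w \<in> A" and ne: "w \<noteq> v"
    have "d b0 v = 3" "d b0 w = 3" "1 \<le> d v w" "d v w \<le> 4" using dAB[OF v b0] ds[of b0 v] dAB[OF w b0] ds[of b0 w] dAA[OF v w] ne by auto
    moreover have "w \<noteq> b0" using w b0 nAB by blast
    ultimately show "w \<notin> line V d b0 v" using NI[of w b0 v] ne by simp
  qed
  have F01: "\<And>z. z \<in> Z \<Longrightarrow> z \<in> line V d a0 y3"
  proof -
    fix z assume z: "z \<in> Z"
    have "d a0 y3 = 3" "d a0 z = 2" "d y3 z = 1" using dAY3[OF a0 y3] dAZ[OF a0 z] dYZ1[OF y3(1) z] by auto
    then show "z \<in> line V d a0 y3" using II[of z a0 y3] z ZV by auto
  qed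
  have F03: "\<And>b. b \<in> B \<Longrightarrow> b \<notin> line V d a0 y3"
  proof -
    fix v assume v: "v \<in> B"
    have "d a0 y3 = 3" "d a0 v = 3" "d y3 v = 2" using dAY3[OF a0 y3] dAB[OF a0 v] dBY[OF v y3(1)] ds[of y3 v] by auto
    moreover have "v \<noteq> a0" "v \<noteq> y3" using y3 a0 v nAB BX nXY by blast+
    ultimately show "v \<notin> line V d a0 y3" using NI[of v a0 y3] by simp
  qed
  have FM1: "\<And>v b. v \<in> M \<Longrightarrow> b \<in> B \<Longrightarrow> b \<notin> line V d a0 v"
  proof -
    fix v b assume v: "v \<in> M" and b: "b \<in> B"
    have "2 \<le> d a0 v" "d a0 v \<le> 3" "d a0 b = 3" "2 \<le> d v b" "d v b \<le> 3"
      using dMA[OF v a0] dAB[OF a0 b] dMB[OF v b] ds[of v b] by auto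
    moreover have "b \<noteq> a0" "b \<noteq> v" using b a0 v nAB nMB by blast+
    ultimately show "b \<notin> line V d a0 v" using NI[of b a0 v] by simp
  qed
  have FM2: "\<And>v w. v \<in> M \<Longrightarrow> w \<in> M \<Longrightarrow> w \<noteq> v \<Longrightarrow> w \<notin> line V d a0 v"
  proof -
    fix v b assume v: "v \<in> M" and b: "b \<in> M" and ne: "b \<noteq> v"
    have "2 \<le> d a0 v" "d a0 v \<le> 3" "2 \<le> d a0 b" "d a0 b \<le> 3" "2 \<le> d v b" "d v b \<le> 3"
      using dMA[OF v a0] dMA[OF b a0] dMM[OF b v] ne by auto
    moreover have "b \<noteq> a0" using b a0 nMA by blast
    ultimately show "b \<notin> line V d a0 v" using NI[of b a0 v] ne by simp
  qed
  have FM3: "\<And>v. v \<in> M \<Longrightarrow> (\<forall>z\<in>Z. z \<notin> line V d a0 v) \<or> y3 \<notin> line V d a0 v"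
  proof -
    fix v assume v: "v \<in> M"
    have r: "2 \<le> d a0 v" "d a0 v \<le> 3" using dMA[OF v a0] by auto
    show "(\<forall>z\<in>Z. z \<notin> line V d a0 v) \<or> y3 \<notin> line V d a0 v"
    proof (cases "d a0 v = 2")
      case True
      have "\<forall>z\<in>Z. z \<notin> line V d a0 v"
      proof
        fix z assume z: "z \<in> Z"
        have "d a0 z = 2" "1 \<le> d v z" "d v z \<le> 3" using dAZ[OF a0 z] dMZ[OF v z] by auto
        moreover have "z \<noteq> a0" "z \<noteq> v" using z a0X v MX nXZ by blast+
        ultimately show "z \<notin> line V d a0 v" using NI[of z a0 v] True by simp
      qed
      then show ?thesis by blast
    next
      case False
      then have 3: "d a0 v = 3" using r by simp
      have "d a0 y3 = 3" "1 \<le> d v y3" "d v y3 \<le> 2" using dAY3[OF a0 y3] dMY[OF v y3(1)] by auto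
      moreover have "y3 \<noteq> a0" "y3 \<noteq> v" using y3 a0X v MX nXY by blast+
      ultimately have "y3 \<notin> line V d a0 v" using NI[of y3 a0 v] 3 by simp
      then show ?thesis by blast
    qed
  qed

  define f where "f v = (if v \<in> Y then line V d b0 v else if v \<in> A \<and> v \<noteq> a0 then line V d b0 v
     else if v = a0 then line V d a0 y3 else line V d a0 v)" for v
  have cls: "\<And>v. v \<in> V \<Longrightarrow> v \<in> Y \<or> v \<in> Z \<or> v = a0 \<or> (v \<in> A \<and> v \<noteq> a0) \<or> v \<in> B \<or> v \<in> M"
    using PV unfolding M_def by blast
  have fY: "\<And>v. v \<in> Y \<Longrightarrow> f v = line V d b0 v" unfolding f_def by simp
  have fA: "\<And>v. v \<in> A \<Longrightarrow> v \<noteq> a0 \<Longrightarrow> f v = line V d b0 v" unfolding f_def using AX nXY by auto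
  have f0: "f a0 = line V d a0 y3" unfolding f_def using a0X nXY by auto
  have fZ: "\<And>v. v \<in> Z \<Longrightarrow> f v = line V d a0 v" unfolding f_def using nYZ a0X AX nXZ by auto
  have fB: "\<And>v. v \<in> B \<Longrightarrow> f v = line V d a0 v" unfolding f_def using nAB BX nXY a0 by auto
  have fM: "\<And>v. v \<in> M \<Longrightarrow> f v = line V d a0 v" unfolding f_def using nMA MX nXY a0 by auto
  have a0V: "a0 \<in> V" and b0V: "b0 \<in> V" and y3V: "y3 \<in> V" using a0X b0X XV y3 YV by blast+
  have img: "f ` V \<subseteq> lines V d"
  proof
    fix L assume "L \<in> f ` V"
    then obtain v where v: "v \<in> V" "L = f v" by blast
    have "\<exists>p q. L = line V d p q \<and> p \<in> V \<and> q \<in> V \<and> p \<noteq> q"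
    proof -
      consider "v \<in> Y" | "v \<in> Z" | "v = a0" | "v \<in> A \<and> v \<noteq> a0" | "v \<in> B" | "v \<in> M" using cls[OF v(1)] by blast
      then show ?thesis
      proof cases
        case 1 then show ?thesis using fY v b0V b0X nXY by metis
      next
        case 2 then show ?thesis using fZ v a0V a0X nXZ by metis
      next
        case 3 then show ?thesis using f0 v a0V y3V a0X y3 nXY by metis
      next
        case 4 then show ?thesis using fA v b0V b0 nAB by metis
      next
        case 5 then show ?thesis using fB v a0V a0 nAB by metis
      next
        case 6 then show ?thesis using fM v a0V a0 nMA by metis
      qed
    qed
    then show "L \<in> lines V d" unfolding lines_def by blast
  qed
  have selff: "\<And>v. v \<in> V \<Longrightarrow> v \<in> f v"
  proof -
    fix v assume v: "v \<in> V"
    consider "v \<in> Y" | "v \<in> Z" | "v = a0" | "v \<in> A \<and> v \<noteq> a0" | "v \<in> B" | "v \<in> M" using cls[OF v] by blast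
    then show "v \<in> f v"
      by cases (use fY fZ f0 fA fB fM self1 self2 in metis)+
  qed
  have GZ: "\<And>v. v \<in> Z \<Longrightarrow> y1 \<in> f v \<and> y3 \<in> f v \<and> (\<forall>y\<in>Y. y \<in> f v) \<and> (\<forall>w\<in>Z. w \<in> f v \<longrightarrow> w = v)"
    using fZ FZ1 FZ2 y1 y3 by metis
  have GY: "\<And>v. v \<in> Y \<Longrightarrow> z3 \<in> f v \<and> (\<forall>z\<in>Z. z \<in> f v) \<and> (\<forall>w\<in>Y. w \<in> f v \<longrightarrow> w = v) \<and> b0 \<in> f v"
    using fY FY1 FY2 z3 self1 by metis
  have GB: "\<And>v. v \<in> B \<Longrightarrow> y3 \<notin> f v \<and> (\<forall>w\<in>B. w \<in> f v \<longrightarrow> w = v) \<and> (\<exists>z\<in>Z. z \<notin> f v) \<and> a0 \<in> f v"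
    using fB FB1 FB2 FB3 self1 by metis
  have GA: "\<And>v. v \<in> A \<Longrightarrow> v \<noteq> a0 \<Longrightarrow> (\<exists>y\<in>Y. y \<notin> f v) \<and> z3 \<notin> f v \<and> a0 \<notin> f v \<and> b0 \<in> f v"
    using fA FA1 FA2 FA3 a0 self1 by metis
  have GA2: "\<And>v w. v \<in> A \<Longrightarrow> v \<noteq> a0 \<Longrightarrow> w \<in> A \<Longrightarrow> w \<in> f v \<Longrightarrow> w = v"
    using fA FA3 by metis
  have G0: "z1 \<in> f a0 \<and> y3 \<in> f a0 \<and> (\<forall>w\<in>B. w \<notin> f a0) \<and> z3 \<in> f a0"
    using f0 F01 F03 z1 z3 self2 by metis
  have GM: "\<And>v. v \<in> M \<Longrightarrow> (\<forall>w\<in>B. w \<notin> f v) \<and> (\<forall>w\<in>M. w \<in> f v \<longrightarrow> w = v) \<and> ((\<forall>z\<in>Z. z \<notin> f v) \<or> y3 \<notin> f v)"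
    using fM FM1 FM2 FM3 by metis
  have sYY: "\<And>u v. u \<in> Y \<Longrightarrow> v \<in> Y \<Longrightarrow> u \<noteq> v \<Longrightarrow> f u \<noteq> f v"
  proof
    fix u v assume u: "u \<in> Y" and v: "v \<in> Y" and ne: "u \<noteq> v" and eq: "f u = f v"
    have "v \<in> f u" unfolding eq using selff[of v] v YV by blast+
    then show False using GY[OF u] v ne by blast
  qed
  have sZZ: "\<And>u v. u \<in> Z \<Longrightarrow> v \<in> Z \<Longrightarrow> u \<noteq> v \<Longrightarrow> f u \<noteq> f v"
  proof
    fix u v assume u: "u \<in> Z" and v: "v \<in> Z" and ne: "u \<noteq> v" and eq: "f u = f v"
    have "v \<in> f u" unfolding eq using selff[of v] v ZV by blast+
    then show False using GZ[OF u] v ne by blast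
  qed
  have sAA: "\<And>u v. u \<in> A \<Longrightarrow> u \<noteq> a0 \<Longrightarrow> v \<in> A \<Longrightarrow> u \<noteq> v \<Longrightarrow> f u \<noteq> f v"
  proof
    fix u v assume u: "u \<in> A" "u \<noteq> a0" and v: "v \<in> A" and ne: "u \<noteq> v" and eq: "f u = f v"
    have "v \<in> f u" unfolding eq using selff[of v] v AV by blast+
    then show False using GA2[OF u v] ne by blast
  qed
  have sBB: "\<And>u v. u \<in> B \<Longrightarrow> v \<in> B \<Longrightarrow> u \<noteq> v \<Longrightarrow> f u \<noteq> f v"
  proof
    fix u v assume u: "u \<in> B" and v: "v \<in> B" and ne: "u \<noteq> v" and eq: "f u = f v"
    have "v \<in> f u" unfolding eq using selff[of v] v BV by blast+
    then show False using GB[OF u] v ne by blast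
  qed
  have sMM: "\<And>u v. u \<in> M \<Longrightarrow> v \<in> M \<Longrightarrow> u \<noteq> v \<Longrightarrow> f u \<noteq> f v"
  proof
    fix u v assume u: "u \<in> M" and v: "v \<in> M" and ne: "u \<noteq> v" and eq: "f u = f v"
    have "v \<in> f u" unfolding eq using selff[of v] v MV by blast+
    then show False using GM[OF u] v ne by blast
  qed
  have sYZ: "\<And>u v. u \<in> Y \<Longrightarrow> v \<in> Z \<Longrightarrow> f u \<noteq> f v"
  proof
    fix u v assume u: "u \<in> Y" and v: "v \<in> Z" and eq: "f u = f v"
    have "y1 \<in> f u" "y3 \<in> f u" unfolding eq using GZ[OF v] by blast+
    then show False using GY[OF u] y1(1) y3(1) y13 by blast
  qed
  have sY0: "\<And>u. u \<in> Y \<Longrightarrow> f u \<noteq> f a0"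
  proof
    fix u assume u: "u \<in> Y" and eq: "f u = f a0"
    have "b0 \<in> f a0" unfolding eq[symmetric] using GY[OF u] by blast+
    then show False using G0 b0 by blast
  qed
  have sYA: "\<And>u v. u \<in> Y \<Longrightarrow> v \<in> A \<Longrightarrow> v \<noteq> a0 \<Longrightarrow> f u \<noteq> f v"
  proof
    fix u v assume u: "u \<in> Y" and v: "v \<in> A" "v \<noteq> a0" and eq: "f u = f v"
    have "z3 \<in> f v" unfolding eq[symmetric] using GY[OF u] by blast+
    then show False using GA[OF v] by blast
  qed
  have sYB: "\<And>u v. u \<in> Y \<Longrightarrow> v \<in> B \<Longrightarrow> f u \<noteq> f v"
  proof
    fix u v assume u: "u \<in> Y" and v: "v \<in> B" and eq: "f u = f v"
    have "\<forall>z\<in>Z. z \<in> f v" unfolding eq[symmetric] using GY[OF u] by blast+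
    then show False using GB[OF v] by blast
  qed
  have sYM: "\<And>u v. u \<in> Y \<Longrightarrow> v \<in> M \<Longrightarrow> f u \<noteq> f v"
  proof
    fix u v assume u: "u \<in> Y" and v: "v \<in> M" and eq: "f u = f v"
    have "b0 \<in> f v" unfolding eq[symmetric] using GY[OF u] by blast+
    then show False using GM[OF v] b0 by blast
  qed
  have sZ0: "\<And>u. u \<in> Z \<Longrightarrow> f u \<noteq> f a0"
  proof
    fix u assume u: "u \<in> Z" and eq: "f u = f a0"
    have "z1 \<in> f u" "z3 \<in> f u" unfolding eq using G0 by blast+
    then show False using GZ[OF u] z1(1) z3(1) z13 by blast
  qed
  have sZA: "\<And>u v. u \<in> Z \<Longrightarrow> v \<in> A \<Longrightarrow> v \<noteq> a0 \<Longrightarrow> f u \<noteq> f v"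
  proof
    fix u v assume u: "u \<in> Z" and v: "v \<in> A" "v \<noteq> a0" and eq: "f u = f v"
    have "\<forall>y\<in>Y. y \<in> f v" unfolding eq[symmetric] using GZ[OF u] by blast+
    then show False using GA[OF v] by blast
  qed
  have sZB: "\<And>u v. u \<in> Z \<Longrightarrow> v \<in> B \<Longrightarrow> f u \<noteq> f v"
  proof
    fix u v assume u: "u \<in> Z" and v: "v \<in> B" and eq: "f u = f v"
    have "y3 \<in> f v" unfolding eq[symmetric] using GZ[OF u] by blast+
    then show False using GB[OF v] by blast
  qed
  have sZM: "\<And>u v. u \<in> Z \<Longrightarrow> v \<in> M \<Longrightarrow> f u \<noteq> f v"
  proof
    fix u v assume u: "u \<in> Z" and v: "v \<in> M" and eq: "f u = f v"
    have "u \<in> f v" "y3 \<in> f v" unfolding eq[symmetric] using GZ[OF u] selff[of u] u ZV by blast+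
    then show False using GM[OF v] u by blast
  qed
  have s0A: "\<And>v. v \<in> A \<Longrightarrow> v \<noteq> a0 \<Longrightarrow> f a0 \<noteq> f v"
  proof
    fix v assume v: "v \<in> A" "v \<noteq> a0" and eq: "f a0 = f v"
    have "b0 \<in> f a0" unfolding eq using GA[OF v] by blast+
    then show False using G0 b0 by blast
  qed
  have s0B: "\<And>v. v \<in> B \<Longrightarrow> f a0 \<noteq> f v"
  proof
    fix v assume v: "v \<in> B" and eq: "f a0 = f v"
    have "v \<in> f a0" unfolding eq using selff[of v] v BV by blast+
    then show False using G0 v by blast
  qed
  have s0M: "\<And>v. v \<in> M \<Longrightarrow> f a0 \<noteq> f v"
  proof
    fix v assume v: "v \<in> M" and eq: "f a0 = f v"
    have "z1 \<in> f v" "y3 \<in> f v" unfolding eq[symmetric] using G0 by blast+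
    then show False using GM[OF v] z1(1) by blast
  qed
  have sAB: "\<And>u v. u \<in> A \<Longrightarrow> u \<noteq> a0 \<Longrightarrow> v \<in> B \<Longrightarrow> f u \<noteq> f v"
  proof
    fix u v assume u: "u \<in> A" "u \<noteq> a0" and v: "v \<in> B" and eq: "f u = f v"
    have "a0 \<in> f u" unfolding eq using GB[OF v] by blast+
    then show False using GA[OF u] by blast
  qed
  have sAM: "\<And>u v. u \<in> A \<Longrightarrow> u \<noteq> a0 \<Longrightarrow> v \<in> M \<Longrightarrow> f u \<noteq> f v"
  proof
    fix u v assume u: "u \<in> A" "u \<noteq> a0" and v: "v \<in> M" and eq: "f u = f v"
    have "b0 \<in> f v" unfolding eq[symmetric] using GA[OF u] by blast+
    then show False using GM[OF v] b0 by blast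
  qed
  have sBM: "\<And>u v. u \<in> B \<Longrightarrow> v \<in> M \<Longrightarrow> f u \<noteq> f v"
  proof
    fix u v assume u: "u \<in> B" and v: "v \<in> M" and eq: "f u = f v"
    have "u \<in> f v" unfolding eq[symmetric] using selff[of u] u BV by blast+
    then show False using GM[OF v] u by blast
  qed
  have inj: "inj_on f V"
  proof (rule inj_onI, rule ccontr)
    fix u v assume u: "u \<in> V" and v: "v \<in> V" and eq: "f u = f v" and ne: "u \<noteq> v"
    have ne': "v \<noteq> u" and eq': "f v = f u" using ne eq by auto
    consider "u \<in> Y" | "u \<in> Z" | "u = a0" | "u \<in> A \<and> u \<noteq> a0" | "u \<in> B" | "u \<in> M" using cls[OF u] by blast
    then show False
    proof cases
      case cu: 1
      consider "v \<in> Y" | "v \<in> Z" | "v = a0" | "v \<in> A \<and> v \<noteq> a0" | "v \<in> B" | "v \<in> M" using cls[OF v] by blast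
      then show False
        by cases (use cu eq ne sYY sYZ sY0 sYA sYB sYM in blast)+
    next
      case cu: 2
      consider "v \<in> Y" | "v \<in> Z" | "v = a0" | "v \<in> A \<and> v \<noteq> a0" | "v \<in> B" | "v \<in> M" using cls[OF v] by blast
      then show False
        by cases (use cu eq eq' ne sYZ sZZ sZ0 sZA sZB sZM in blast)+
    next
      case cu: 3
      consider "v \<in> Y" | "v \<in> Z" | "v = a0" | "v \<in> A \<and> v \<noteq> a0" | "v \<in> B" | "v \<in> M" using cls[OF v] by blast
      then show False
        by cases (use cu eq eq' ne sY0 sZ0 s0A s0B s0M in blast)+
    next
      case cu: 4
      consider "v \<in> Y" | "v \<in> Z" | "v = a0" | "v \<in> A \<and> v \<noteq> a0" | "v \<in> B" | "v \<in> M" using cls[OF v] by blast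
      then show False
        by cases (use cu eq eq' ne sYA sZA s0A sAA sAB sAM in blast)+
    next
      case cu: 5
      consider "v \<in> Y" | "v \<in> Z" | "v = a0" | "v \<in> A \<and> v \<noteq> a0" | "v \<in> B" | "v \<in> M" using cls[OF v] by blast
      then show False
        by cases (use cu eq eq' ne sYB sZB s0B sAB sBB sBM in blast)+
    next
      case cu: 6
      consider "v \<in> Y" | "v \<in> Z" | "v = a0" | "v \<in> A \<and> v \<noteq> a0" | "v \<in> B" | "v \<in> M" using cls[OF v] by blast
      then show False
        by cases (use cu eq eq' ne sYM sZM s0M sAM sBM sMM in blast)+
    qed
  qed
  have finL: "finite (lines V d)"
  proof -
    have "lines V d \<subseteq> (\<lambda>(p, q). line V d p q) ` (V \<times> V)" unfolding lines_def by auto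
    then show ?thesis using fin finite_subset by blast
  qed
  have "card V \<le> card (lines V d)"
    using card_inj_on_le[OF inj img finL] .
  then show ?thesis unfolding de_bruijn_erdos_def d_def by blast
qed


end
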